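(* Let $n\ge 2$, $N=2^n$, let $a_1,\dots,a_{N-1}$ be scalars, and for $1\le k\le N-1$ define \[ M_k = a_k \sum_{i=0}^{N-1-k} \big(\ket{i}\bra{i+k} + \ket{i+k}\bra{i}\big). \] Fix an integer $j$ with $1\le j<n$ and let $C_j=\{k : 1\le k<2^n,\ k\equiv 2^{j-1} \pmod{2^j}\}$. If $a_k=a_{2^{j-1}}$ for all $k\in C_j$, then \[ \sum_{k\in C_j} M_k = a_{2^{j-1}} \sum_{k\in C_j} X^{b_n(k)}\otimes X^{b_{n-1}(k)}\otimes\cdots\otimes X^{b_1(k)}, \] where $k=\sum_{i=1}^n b_i(k)2^{i-1}$ with $b_i(k)\in\{0,1\}$ is the $n$-bit binary representation of $k$, $X$ is the Pauli $X$ matrix, and $X^0=I$.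
   Context: Computational basis states $\ket{i}$, $i\in\{0,\dots,N-1\}$, of $n$ qubits are identified with $\ket{i_n i_{n-1}\cdots i_1}$ where $i=\sum_{l=1}^n i_l 2^{l-1}$, the leftmost tensor factor corresponding to the most significant bit. The matrices $M_k$ are the diagonal components of the $N\times N$ symmetric Toeplitz matrix with entries $a_{|i-j|}$. *)

theory Defs
  imports "Jordan_Normal_Form.Matrix"
begin

definition ketbra :: "nat \<Rightarrow> nat \<Rightarrow> nat \<Rightarrow> complex mat" where
  "ketbra N i j = mat N N (\<lambda>(r, c). if r = i \<and> c = j then 1 else 0)"

definition msum :: "nat \<Rightarrow> ('b \<Rightarrow> complex mat) \<Rightarrow> 'b set \<Rightarrow> complex mat" where
  "msum N f S = mat N N (\<lambda>(r, c). \<Sum>k\<in>S. f k $$ (r, c))"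

definition Mk :: "nat \<Rightarrow> (nat \<Rightarrow> complex) \<Rightarrow> nat \<Rightarrow> complex mat" where
  "Mk N a k = a k \<cdot>\<^sub>m msum N (\<lambda>i. ketbra N i (i + k) + ketbra N (i + k) i) {0..N - 1 - k}"

definition kron :: "complex mat \<Rightarrow> complex mat \<Rightarrow> complex mat" where
  "kron A B = mat (dim_row A * dim_row B) (dim_col A * dim_col B)
     (\<lambda>(i, j). A $$ (i div dim_row B, j div dim_col B) * B $$ (i mod dim_row B, j mod dim_col B))"

definition pauli_X :: "complex mat" where
  "pauli_X = mat_of_rows_list 2 [[0, 1], [1, 0]]"

text \<open>i-th binary digit b_i(k) (i \<ge> 1), so k = sum_i b_i(k) 2^(i-1).\<close>
definition bdig :: "nat \<Rightarrow> nat \<Rightarrow> nat" where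
  "bdig i k = (k div 2 ^ (i - 1)) mod 2"

fun xstring :: "nat \<Rightarrow> nat \<Rightarrow> complex mat" where
  "xstring k 0 = 1\<^sub>m 1"
| "xstring k (Suc m) = kron (pauli_X ^\<^sub>m bdig (Suc m) k) (xstring k m)"

end

theory Submission
  imports Defs
begin
unbundle bit_operations_syntax

lemma X_dim: "pauli_X \<in> carrier_mat 2 2"
proof -
  have l: "length [[0::complex, 1], [1, 0]] = 2" by simp
  show ?thesis unfolding pauli_X_def mat_of_rows_list_def l by (rule mat_carrier)
qed
lemma Xpow: assumes "b < 2" "p < 2" "q < 2"
  shows "(pauli_X ^\<^sub>m b) $$ (p,q) = (if (odd p \<noteq> odd q) = odd b then 1 else 0)"
proof -
  have b: "b = 0 \<or> b = 1" and p: "p = 0 \<or> p = 1" and q: "q = 0 \<or> q = 1" using assms by auto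
  show "(pauli_X ^\<^sub>m b) $$ (p,q) = (if (odd p \<noteq> odd q) = odd b then 1 else 0)"
    using b p q X_dim by (auto simp: pauli_X_def mat_of_rows_list_def)
qed
lemma Xpow_dim: "pauli_X ^\<^sub>m b \<in> carrier_mat 2 2" using X_dim by (rule pow_carrier_mat)

lemma kron_dim[simp]: "dim_row (kron A B) = dim_row A * dim_row B" "dim_col (kron A B) = dim_col A * dim_col B"
  by (simp_all add: kron_def)
lemma kron_index: "r < dim_row A * dim_row B \<Longrightarrow> c < dim_col A * dim_col B \<Longrightarrow>
  kron A B $$ (r,c) = A $$ (r div dim_row B, c div dim_col B) * B $$ (r mod dim_row B, c mod dim_col B)"
  by (simp add: kron_def)

lemma xstring_dim: "xstring k m \<in> carrier_mat (2^m) (2^m)"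
proof (induction m)
  case (Suc m)
  have "dim_row (pauli_X ^\<^sub>m b) = 2" "dim_col (pauli_X ^\<^sub>m b) = 2" for b
    using Xpow_dim[of b] by auto
  with Suc show ?case unfolding carrier_mat_def xstring.simps kron_dim by simp
qed simp

lemma xstring_entry: "r < 2^m \<Longrightarrow> c < 2^m \<Longrightarrow>
  xstring k m $$ (r,c) = (if (\<forall>i<m. (bit r i \<noteq> bit c i) = bit k i) then 1 else 0)"
proof (induction m arbitrary: r c)
  case 0
  then show ?case by simp
next
  case (Suc m)
  have d: "dim_row (xstring k m) = 2^m" "dim_col (xstring k m) = 2^m"
    using xstring_dim[of k m] by auto
  have dx: "dim_row (pauli_X ^\<^sub>m b) = 2" "dim_col (pauli_X ^\<^sub>m b) = 2" for b
    using Xpow_dim[of b] by auto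
  have rd: "r div 2^m < 2" "c div 2^m < 2" using Suc.prems by (auto simp: less_mult_imp_div_less)
  have IH: "xstring k m $$ (r mod 2^m, c mod 2^m) = (if (\<forall>i<m. (bit r i \<noteq> bit c i) = bit k i) then 1 else 0)"
  proof -
    have bm: "bit (v mod 2^m) i = bit v i" if "i < m" for v i :: nat
      using that by (simp add: take_bit_eq_mod[symmetric] bit_take_bit_iff)
    have "r mod 2^m < 2^m" "c mod 2^m < 2^m" by simp_all
    from Suc.IH[OF this] show ?thesis by (simp add: bm)
  qed
  have X: "(pauli_X ^\<^sub>m bdig (Suc m) k) $$ (r div 2^m, c div 2^m) = (if (bit r m \<noteq> bit c m) = bit k m then 1 else 0)"
    using Xpow[OF _ rd, of "bdig (Suc m) k"] by (simp add: bdig_def bit_iff_odd odd_iff_mod_2_eq_one)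
  have "xstring k (Suc m) $$ (r,c) = (pauli_X ^\<^sub>m bdig (Suc m) k) $$ (r div 2^m, c div 2^m) * xstring k m $$ (r mod 2^m, c mod 2^m)"
    unfolding xstring.simps using kron_index[of r "pauli_X ^\<^sub>m bdig (Suc m) k" "xstring k m" c] Suc.prems
    unfolding d dx by simp
  also have "\<dots> = (if (\<forall>i<Suc m. (bit r i \<noteq> bit c i) = bit k i) then 1 else 0)"
    unfolding X IH by (auto simp: less_Suc_eq)
  finally show ?case .
qed


lemma modcond: "(k::nat) mod 2^(Suc s) = 2^s \<longleftrightarrow> k mod 2^s = 0 \<and> bit k s"
proof -
  have e: "k mod 2^(Suc s) = k mod 2^s + 2^s * (k div 2^s mod 2)"
    unfolding power_Suc2 mod_mult2_eq by simp
  have lt: "k mod 2^s \<noteq> 2^s" by (metis mod_less_divisor less_irrefl pos2 zero_less_power)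
  show ?thesis
  proof (cases "k div 2^s mod 2 = 0")
    case True
    then show ?thesis unfolding e bit_iff_odd using lt by auto
  next
    case False
    then have "k div 2^s mod 2 = 1" by auto
    then show ?thesis unfolding e bit_iff_odd by auto
  qed
qed

lemma mod0_bits: "(v::nat) mod 2^s = 0 \<longleftrightarrow> (\<forall>i<s. \<not> bit v i)"
  unfolding take_bit_eq_mod[symmetric] by (auto simp: bit_eq_iff[of _ 0] bit_take_bit_iff)

lemma modeq_bits: "(r::nat) mod 2^s = c mod 2^s \<longleftrightarrow> (\<forall>i<s. bit r i = bit c i)"
  unfolding take_bit_eq_mod[symmetric] bit_eq_iff[of "take_bit s r"] bit_take_bit_iff by auto

lemma diff_cond: assumes "(r::nat) \<le> c"
  shows "(c - r) mod 2^Suc s = 2^s \<longleftrightarrow> (\<forall>i<s. bit r i = bit c i) \<and> bit r s \<noteq> bit c s"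
proof -
  have m0: "(c - r) mod 2^s = 0 \<longleftrightarrow> r mod 2^s = c mod 2^s"
    using mod_eq_dvd_iff_nat[OF assms, of "2^s"] by (auto simp: dvd_eq_mod_eq_0)
  have "bit (c - r) s = (bit r s \<noteq> bit c s)" if h: "r mod 2^s = c mod 2^s"
  proof -
    define t where "t = c mod 2^s"
    define R where "R = r div 2^s"
    define Q where "Q = c div 2^s"
    have r: "r = 2^s * R + t" and c: "c = 2^s * Q + t"
      using h unfolding t_def R_def Q_def by (metis div_mult_mod_eq mult.commute)+
    have le: "R \<le> Q" using assms unfolding R_def Q_def by (simp add: div_le_mono)
    have "c - r = 2^s * (Q - R)" unfolding r c by (simp add: diff_mult_distrib2)
    then have "(c - r) div 2^s = Q - R" by simp
    moreover have "r div 2^s = R" "c div 2^s = Q" using R_def Q_def by auto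
    ultimately have dd: "(c - r) div 2^s = c div 2^s - r div 2^s" by simp
    have le: "r div 2^s \<le> c div 2^s" using assms by (simp add: div_le_mono)

    show ?thesis unfolding bit_iff_odd dd using le by auto
  qed
  then show ?thesis unfolding modcond m0 modeq_bits by auto
qed

lemma xor_cond: "((r::nat) XOR c) mod 2^Suc s = 2^s \<longleftrightarrow> (\<forall>i<s. bit r i = bit c i) \<and> bit r s \<noteq> bit c s"
  unfolding modcond mod0_bits by (auto simp: bit_xor_iff)


lemma msum_index: "r < N \<Longrightarrow> c < N \<Longrightarrow> msum N f S $$ (r,c) = (\<Sum>k\<in>S. f k $$ (r,c))"
  by (simp add: msum_def)

lemma ketbra_index: "r < N \<Longrightarrow> c < N \<Longrightarrow> ketbra N i j $$ (r,c) = (if r = i \<and> c = j then 1 else 0)"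
  by (simp add: ketbra_def)

lemma Mk_entry: assumes "r < N" "c < N" "1 \<le> k"
  shows "Mk N a k $$ (r,c) = (if r + k = c \<or> c + k = r then a k else 0)"
proof -
  have "Mk N a k $$ (r,c) = a k * (\<Sum>i\<in>{0..N-1-k}. (ketbra N i (i + k) + ketbra N (i + k) i) $$ (r,c))"
    unfolding Mk_def using assms by (simp add: msum_def)
  also have "(\<Sum>i\<in>{0..N-1-k}. (ketbra N i (i + k) + ketbra N (i + k) i) $$ (r,c))
     = (\<Sum>i\<in>{0..N-1-k}. (if i = r then (if c = r + k then 1 else 0) else 0))
     + (\<Sum>i\<in>{0..N-1-k}. (if i = c then (if r = c + k then 1 else 0) else 0))"
    unfolding sum.distrib[symmetric]
    by (rule sum.cong) (use assms in \<open>auto simp: ketbra_def\<close>)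
  also have "\<dots> = (if r + k = c \<or> c + k = r then 1 else 0)"
    using assms by (auto simp: sum.delta)
  finally show ?thesis by simp
qed

lemma xor_lt: "(r::nat) < 2^n \<Longrightarrow> c < 2^n \<Longrightarrow> r XOR c < 2^n"
  by (metis take_bit_nat_eq_self_iff take_bit_xor)

lemma xstring_cond: assumes "r < 2^n" "c < 2^n" "(k::nat) < 2^n"
  shows "(\<forall>i<n. (bit r i \<noteq> bit c i) = bit k i) \<longleftrightarrow> k = r XOR c"
proof -
  have x: "r XOR c < 2^n" using assms xor_lt by blast
  have "bit v i \<Longrightarrow> i < n" if "v < 2^n" for v :: nat and i
    using that by (metis bit_take_bit_iff take_bit_nat_eq_self_iff)
  then show ?thesis using assms x by (auto simp: bit_eq_iff bit_xor_iff)
qed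


lemma xor0: "(r::nat) XOR c = 0 \<longleftrightarrow> r = c"
  by (auto simp: bit_eq_iff bit_xor_iff)

theorem theorem2:
  fixes n j :: nat and a :: "nat \<Rightarrow> complex"
  assumes "n \<ge> 2"
    and "1 \<le> j" and "j < n"
    and "\<forall>k\<in>{k. 1 \<le> k \<and> k < 2 ^ n \<and> k mod 2 ^ j = 2 ^ (j - 1)}. a k = a (2 ^ (j - 1))"
  shows "msum (2 ^ n) (Mk (2 ^ n) a) {k. 1 \<le> k \<and> k < 2 ^ n \<and> k mod 2 ^ j = 2 ^ (j - 1)}
       = a (2 ^ (j - 1)) \<cdot>\<^sub>m msum (2 ^ n) (\<lambda>k. xstring k n)
           {k. 1 \<le> k \<and> k < 2 ^ n \<and> k mod 2 ^ j = 2 ^ (j - 1)}"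
    (is "?L = ?R")
proof (rule eq_matI)
  define C where "C = {k. 1 \<le> k \<and> k < (2::nat) ^ n \<and> k mod 2 ^ j = 2 ^ (j - 1)}"
  define s where "s = j - 1"
  have fin: "finite C" unfolding C_def by (rule finite_subset[of _ "{..<2^n}"]) auto
  have js: "j = Suc s" using assms(2) s_def by simp
  show "dim_row ?L = dim_row ?R" "dim_col ?L = dim_col ?R" by (simp_all add: msum_def)
  fix r c assume "r < dim_row ?R" "c < dim_col ?R"
  then have rc: "r < 2^n" "c < 2^n" by (simp_all add: msum_def)
  define d where "d = (if r \<le> c then c - r else r - c)"
  have dlt: "d < 2^n" using rc d_def by auto
  have dC: "d \<in> C \<longleftrightarrow> r XOR c \<in> C"
  proof -
    have "d mod 2^j = 2^s \<longleftrightarrow> (r XOR c) mod 2^j = 2^s"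
    proof (cases "r \<le> c")
      case True
      then have dd: "d = c - r" using d_def by simp
      show ?thesis unfolding js dd diff_cond[OF True] xor_cond ..
    next
      case False
      then have le: "c \<le> r" by simp
      then have dd: "d = r - c" using d_def False by simp
      show ?thesis unfolding js dd diff_cond[OF le] xor_cond by blast
    qed
    moreover have "1 \<le> d \<longleftrightarrow> r \<noteq> c" unfolding d_def by auto
    moreover have "1 \<le> r XOR c \<longleftrightarrow> r \<noteq> c" using xor0[of r c] by linarith
    ultimately show ?thesis unfolding C_def s_def mem_Collect_eq using dlt xor_lt[OF rc] by blast
  qed
  have "?L $$ (r,c) = (\<Sum>k\<in>C. if k = d then a k else 0)"
    unfolding C_def[symmetric]
  proof -
    have "msum (2^n) (Mk (2^n) a) C $$ (r,c) = (\<Sum>k\<in>C. Mk (2^n) a k $$ (r,c))"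
      by (rule msum_index[OF rc])
    also have "\<dots> = (\<Sum>k\<in>C. if k = d then a k else 0)"
    proof (rule sum.cong[OF refl])
      fix k assume "k \<in> C"
      then have "1 \<le> k" by (simp add: C_def)
      then show "Mk (2^n) a k $$ (r,c) = (if k = d then a k else 0)"
        using Mk_entry[OF rc \<open>1 \<le> k\<close>] d_def by auto
    qed
    finally show "msum (2^n) (Mk (2^n) a) C $$ (r,c) = (\<Sum>k\<in>C. if k = d then a k else 0)" .
  qed
  also have "\<dots> = (if d \<in> C then a (2^(j-1)) else 0)"
    using assms(4) fin unfolding C_def[symmetric] by (simp add: sum.delta)
  also have "\<dots> = a (2^(j-1)) * (\<Sum>k\<in>C. if k = r XOR c then 1 else 0)"
    using fin by (simp add: sum.delta dC)
  also have "(\<Sum>k\<in>C. if k = r XOR c then 1 else 0) = (\<Sum>k\<in>C. xstring k n $$ (r,c))"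
  proof (rule sum.cong[OF refl])
    fix k assume "k \<in> C"
    then have klt: "k < 2^n" by (simp add: C_def)
    show "(if k = r XOR c then 1 else 0) = xstring k n $$ (r,c)"
      by (simp only: xstring_entry[OF rc] xstring_cond[OF rc klt])
  qed
  also have "a (2^(j-1)) * \<dots> = ?R $$ (r,c)"
  proof -
    have dm: "dim_row (msum (2^n) (\<lambda>k. xstring k n) C) = 2^n" "dim_col (msum (2^n) (\<lambda>k. xstring k n) C) = 2^n"
      by (simp_all add: msum_def)
    have "?R $$ (r,c) = a (2^(j-1)) * msum (2^n) (\<lambda>k. xstring k n) C $$ (r,c)"
      unfolding C_def[symmetric] by (rule index_smult_mat(1)) (use rc dm in auto)
    then show ?thesis using msum_index[OF rc, of "\<lambda>k. xstring k n" C] by simp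
  qed
  finally show "?L $$ (r,c) = ?R $$ (r,c)" .
qed
end
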